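(* Let $k\ge 4$ and let $w$ be a minimal uncompletable word for $S_k$. Let $p$ and $q$ be two consecutive occurrences of $v=b^{k-1}a$ in $w$ ($p$ before $q$), with sets of forbidden local positions $F_p$ and $F_q$. If $F_q=\{0,i,i+1,\dots,k-2\}$ for some $1\le i\le k-2$, then $|F_p|<|F_q|$.
   Context: $\Sigma=\{a,b\}$. $S_k=\left(\Sigma^k\setminus\{ba^{k-1},b^{k-1}a\}\right)\cup\left(\Sigma^{k-1}\setminus\{a^{k-1},b^{k-1}\}\right)$, $u=ba^{k-1}$, $v=b^{k-1}a$. $\mathit{Fact}(S^* )$ and $\mathit{Pref}(S^* )$ are the sets of factors and of prefixes of words in $S^*$. A word $w\notin\mathit{Fact}(S_k^* )$ is uncompletable; a minimal uncompletable word is one of minimal length. For $w=w_1\cdots w_n$, $w[i..j]=w_i\cdots w_j$ (empty if $i>j$). A position $j$, $0\le j\le n-1$, is forbidden in $w$ if $w[j+1..n]\notin\mathit{Pref}(S_k^* )$. An occurrence of $p\in\{u,v\}$ in $w$ is an index $s$ with $w[s+1..s+k]=p$; local position $i\in\{0,\dots,k-1\}$ is the position $s+i$ of $w$, and it is forbidden in the occurrence if $s+i$ is forbidden in $w$. Two occurrences of words from $\{u,v\}$ starting at $s<t$ overlap if $t<s+k$; they are consecutive if either they overlap or they are the only occurrences of $u$ or $v$ lying inside the factor $w[s+1..t+k]$. *)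

theory Defs
  imports Main
begin

datatype letter = La | Lb

type_synonym word = "letter list"

definition u_word :: "nat \<Rightarrow> word" where
  "u_word k = Lb # replicate (k - 1) La"

definition v_word :: "nat \<Rightarrow> word" where
  "v_word k = replicate (k - 1) Lb @ [La]"

definition S :: "nat \<Rightarrow> word set" where
  "S k = ({w. length w = k} - {u_word k, v_word k})
         \<union> ({w. length w = k - 1} - {replicate (k - 1) La, replicate (k - 1) Lb})"

definition kstar :: "word set \<Rightarrow> word set" where
  "kstar L = {concat ws | ws. set ws \<subseteq> L}"

definition Fact :: "word set \<Rightarrow> word set" where
  "Fact L = {x. \<exists>y z. y @ x @ z \<in> L}"

definition Pref :: "word set \<Rightarrow> word set" where
  "Pref L = {x. \<exists>z. x @ z \<in> L}"

definition uncompletable :: "nat \<Rightarrow> word \<Rightarrow> bool" where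
  "uncompletable k w \<longleftrightarrow> w \<notin> Fact (kstar (S k))"

definition minimal_uncompletable :: "nat \<Rightarrow> word \<Rightarrow> bool" where
  "minimal_uncompletable k w \<longleftrightarrow> uncompletable k w \<and>
     (\<forall>w'. uncompletable k w' \<longrightarrow> length w \<le> length w')"

text \<open>Position j (0 \<le> j \<le> n-1) is forbidden in w if w[j+1..n] = drop j w is not in Pref(S_k^*).\<close>
definition forbidden :: "nat \<Rightarrow> word \<Rightarrow> nat \<Rightarrow> bool" where
  "forbidden k w j \<longleftrightarrow> j < length w \<and> drop j w \<notin> Pref (kstar (S k))"

text \<open>An occurrence of p at index s: w[s+1..s+k] = p.\<close>
definition occ :: "nat \<Rightarrow> word \<Rightarrow> word \<Rightarrow> nat \<Rightarrow> bool" where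
  "occ k w p s \<longleftrightarrow> s + k \<le> length w \<and> take k (drop s w) = p"

definition occ_uv :: "nat \<Rightarrow> word \<Rightarrow> nat \<Rightarrow> bool" where
  "occ_uv k w s \<longleftrightarrow> occ k w (u_word k) s \<or> occ k w (v_word k) s"

definition forb_local :: "nat \<Rightarrow> word \<Rightarrow> nat \<Rightarrow> nat set" where
  "forb_local k w s = {i. i < k \<and> forbidden k w (s + i)}"

definition consecutive :: "nat \<Rightarrow> word \<Rightarrow> nat \<Rightarrow> nat \<Rightarrow> bool" where
  "consecutive k w s t \<longleftrightarrow> occ_uv k w s \<and> occ_uv k w t \<and> s < t \<and>
     (t < s + k \<or> (\<forall>r. occ_uv k w r \<and> s \<le> r \<and> r + k \<le> t + k \<longrightarrow> r = s \<or> r = t))"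

end

theory Submission
  imports Defs
begin


lemma kstar_app: "a \<in> kstar L \<Longrightarrow> b \<in> kstar L \<Longrightarrow> a @ b \<in> kstar L"
proof -
  assume "a \<in> kstar L" "b \<in> kstar L"
  then obtain ws1 ws2 where "a = concat ws1" "set ws1 \<subseteq> L" "b = concat ws2" "set ws2 \<subseteq> L"
    unfolding kstar_def by auto
  then have "a @ b = concat (ws1 @ ws2) \<and> set (ws1 @ ws2) \<subseteq> L" by auto
  then show ?thesis unfolding kstar_def by blast
qed

lemma kstar_single: "x \<in> L \<Longrightarrow> x \<in> kstar L"
  unfolding kstar_def by (auto intro!: exI[of _ "[x]"])

lemma kstar_nil: "[] \<in> kstar L"
  unfolding kstar_def by (auto intro!: exI[of _ "[]"])

lemma S_k: "k \<ge> 2 \<Longrightarrow> length x = k \<Longrightarrow> (x \<in> S k \<longleftrightarrow> x \<noteq> u_word k \<and> x \<noteq> v_word k)"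
  unfolding S_def by auto

lemma S_k1: "k \<ge> 2 \<Longrightarrow> length x = k - 1 \<Longrightarrow> (x \<in> S k \<longleftrightarrow> x \<noteq> replicate (k-1) La \<and> x \<noteq> replicate (k-1) Lb)"
  unfolding S_def by auto

lemma S_len: "x \<in> S k \<Longrightarrow> length x = k \<or> length x = k - 1"
  unfolding S_def by auto

lemma last_u: "k \<ge> 2 \<Longrightarrow> last (u_word k) = La"
  unfolding u_word_def by (cases "k - 1") auto
lemma last_v: "last (v_word k) = La"
  unfolding v_word_def by auto
lemma hd_u: "hd (u_word k) = Lb" unfolding u_word_def by auto
lemma hd_v: "k \<ge> 2 \<Longrightarrow> hd (v_word k) = Lb"
  unfolding v_word_def by (cases "k - 1") auto
lemma len_u: "k \<ge> 1 \<Longrightarrow> length (u_word k) = k" unfolding u_word_def by auto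
lemma len_v: "k \<ge> 1 \<Longrightarrow> length (v_word k) = k" unfolding v_word_def by auto

lemma pref_short:
  assumes "k \<ge> 2" "length x < k"
  shows "x \<in> Pref (kstar (S k))"
proof -
  let ?z = "replicate (k - length x) Lb"
  have l: "length (x @ ?z) = k" using assms by auto
  have la: "last (x @ ?z) = Lb" using assms by auto
  have "x @ ?z \<noteq> u_word k" using la last_u[OF assms(1)] by auto
  moreover have "x @ ?z \<noteq> v_word k" using la last_v by auto
  ultimately have "x @ ?z \<in> S k" using S_k[OF assms(1) l] by auto
  then show ?thesis unfolding Pref_def by (auto intro!: kstar_single)
qed

lemma pref_rec:
  assumes "k \<ge> 2" "k \<le> length x"
  shows "x \<in> Pref (kstar (S k)) \<longleftrightarrow>
     (take (k-1) x \<in> S k \<and> drop (k-1) x \<in> Pref (kstar (S k))) \<or>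
     (take k x \<in> S k \<and> drop k x \<in> Pref (kstar (S k)))"
proof
  assume "x \<in> Pref (kstar (S k))"
  then obtain z ws where e: "x @ z = concat ws" and ws: "set ws \<subseteq> S k"
    unfolding Pref_def kstar_def by auto
  have "ws \<noteq> []" using e assms by auto
  then obtain v1 ws' where wsd: "ws = v1 # ws'" by (cases ws) auto
  have v1S: "v1 \<in> S k" using ws wsd by auto
  have ws': "set ws' \<subseteq> S k" using ws wsd by auto
  have lv: "length v1 = k \<or> length v1 = k - 1" using S_len[OF v1S] .
  have le: "length v1 \<le> length x" using lv assms by auto
  have e2: "x @ z = v1 @ concat ws'" using e wsd by simp
  have t1: "take (length v1) x = v1"
    using arg_cong[OF e2, of "take (length v1)"] le by simp
  have t2: "drop (length v1) x @ z = concat ws'"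
    using arg_cong[OF e2, of "drop (length v1)"] le by simp
  have "drop (length v1) x \<in> Pref (kstar (S k))"
    using t2 ws' unfolding Pref_def kstar_def by auto
  then show "(take (k-1) x \<in> S k \<and> drop (k-1) x \<in> Pref (kstar (S k))) \<or>
     (take k x \<in> S k \<and> drop k x \<in> Pref (kstar (S k)))"
    using lv t1 v1S by auto
next
  assume h: "(take (k-1) x \<in> S k \<and> drop (k-1) x \<in> Pref (kstar (S k))) \<or>
     (take k x \<in> S k \<and> drop k x \<in> Pref (kstar (S k)))"
  show "x \<in> Pref (kstar (S k))"
  proof (cases "take (k-1) x \<in> S k \<and> drop (k-1) x \<in> Pref (kstar (S k))")
    case True
    then obtain z where "drop (k-1) x @ z \<in> kstar (S k)" unfolding Pref_def by auto
    then have "take (k-1) x @ (drop (k-1) x @ z) \<in> kstar (S k)"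
      using True kstar_app kstar_single by blast
    then have "x @ z \<in> kstar (S k)" by (metis append_assoc append_take_drop_id)
    then show ?thesis unfolding Pref_def by blast
  next
    case False
    then have T: "take k x \<in> S k \<and> drop k x \<in> Pref (kstar (S k))" using h by auto
    then obtain z where "drop k x @ z \<in> kstar (S k)" unfolding Pref_def by auto
    then have "take k x @ (drop k x @ z) \<in> kstar (S k)"
      using T kstar_app kstar_single by blast
    then have "x @ z \<in> kstar (S k)" by (metis append_assoc append_take_drop_id)
    then show ?thesis unfolding Pref_def by blast
  qed
qed

lemma split_concat:
  assumes "k > 0"
  shows "\<forall>a b. concat ws = a @ b \<longrightarrow> (\<forall>v\<in>set ws. length v \<le> k) \<longrightarrow>
     (\<exists>c ws2. b = c @ concat ws2 \<and> length c < k \<and> set ws2 \<subseteq> set ws)"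
proof (induction ws)
  case Nil
  show ?case
  proof (intro allI impI)
    fix a b :: "'a list"
    assume "concat [] = a @ b"
    then have "b = [] @ concat []" by simp
    then show "\<exists>c ws2. b = c @ concat ws2 \<and> length c < k \<and> set ws2 \<subseteq> set []"
      using assms by (intro exI[of _ "[]"]) simp
  qed
next
  case (Cons v1 ws')
  show ?case
  proof (intro allI impI)
    fix a b
    assume e: "concat (v1 # ws') = a @ b" and l: "\<forall>v\<in>set (v1 # ws'). length v \<le> k"
    have e': "v1 @ concat ws' = a @ b" using e by simp
    show "\<exists>c ws2. b = c @ concat ws2 \<and> length c < k \<and> set ws2 \<subseteq> set (v1 # ws')"
    proof (cases "a = []")
      case True
      then have "b = [] @ concat (v1 # ws')" using e by simp
      moreover have "length ([]::'a list) < k" using assms by simp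
      ultimately show ?thesis by blast
    next
      case an: False
      show ?thesis
      proof (cases "length v1 \<le> length a")
        case True
        then have "concat ws' = drop (length v1) a @ b" using e'
          by (auto simp: append_eq_append_conv_if)
        moreover have "\<forall>v\<in>set ws'. length v \<le> k" using l by simp
        ultimately obtain c ws2 where "b = c @ concat ws2 \<and> length c < k \<and> set ws2 \<subseteq> set ws'"
          using Cons.IH by blast
        then show ?thesis by auto
      next
        case False
        then have "b = drop (length a) v1 @ concat ws'" using e'
          by (auto simp: append_eq_append_conv_if)
        moreover have "length (drop (length a) v1) < k"
        proof -
          have "length v1 \<le> k" using l by simp
          moreover have "length a > 0" using an by simp
          ultimately show ?thesis unfolding length_drop using assms by arith
        qed
        moreover have "set ws' \<subseteq> set (v1 # ws')" by auto
        ultimately show ?thesis by blast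
      qed
    qed
  qed
qed

lemma fact_char:
  assumes "k \<ge> 2"
  shows "x \<in> Fact (kstar (S k)) \<longleftrightarrow>
    (\<exists>j. j \<le> k - 1 \<and> j \<le> length x \<and> drop j x \<in> Pref (kstar (S k)))"
proof
  assume "x \<in> Fact (kstar (S k))"
  then obtain y z where yz: "y @ x @ z \<in> kstar (S k)"
    unfolding Fact_def by blast
  then obtain ws where e: "y @ x @ z = concat ws" and ws: "set ws \<subseteq> S k"
    unfolding kstar_def by blast
  have lws: "\<forall>v\<in>set ws. length v \<le> k"
  proof
    fix v assume "v \<in> set ws"
    then have "v \<in> S k" using ws by blast
    then show "length v \<le> k" using S_len[of v k] by linarith
  qed
  have k0: "k > 0" using assms by simp
  have ce: "concat ws = y @ (x @ z)" using e by simp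
  obtain c ws2 where c: "x @ z = c @ concat ws2" "length c < k" "set ws2 \<subseteq> set ws"
    using split_concat[OF k0, of ws] ce lws by blast
  show "\<exists>j. j \<le> k - 1 \<and> j \<le> length x \<and> drop j x \<in> Pref (kstar (S k))"
  proof (cases "length c \<le> length x")
    case True
    have "drop (length c) x @ z = concat ws2"
      using arg_cong[OF c(1), of "drop (length c)"] True by simp
    moreover have "set ws2 \<subseteq> S k" using c(3) ws by blast
    ultimately have "drop (length c) x @ z \<in> kstar (S k)" unfolding kstar_def by blast
    then have "drop (length c) x \<in> Pref (kstar (S k))" unfolding Pref_def by blast
    moreover have "length c \<le> k - 1" using c(2) by simp
    ultimately show ?thesis using True by blast
  next
    case False
    have "drop (length x) x @ [] \<in> kstar (S k)" using kstar_nil by simp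
    then have "drop (length x) x \<in> Pref (kstar (S k))" unfolding Pref_def by blast
    moreover have "length x \<le> k - 1" using False c(2) by simp
    ultimately show ?thesis by blast
  qed
next
  assume "\<exists>j. j \<le> k - 1 \<and> j \<le> length x \<and> drop j x \<in> Pref (kstar (S k))"
  then obtain j z where j: "j \<le> k - 1" "j \<le> length x" and z: "drop j x @ z \<in> kstar (S k)"
    unfolding Pref_def by blast
  let ?h = "replicate (k - j) La"
  have l: "length (?h @ take j x) = k" using j assms by simp
  have hd: "hd (?h @ take j x) = La" using j assms by simp
  have "?h @ take j x \<noteq> u_word k" using hd hd_u[of k] by (metis letter.distinct(1))
  moreover have "?h @ take j x \<noteq> v_word k" using hd hd_v[OF assms] by (metis letter.distinct(1))
  ultimately have "?h @ take j x \<in> S k" using S_k[OF assms l] by blast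
  then have "(?h @ take j x) @ (drop j x @ z) \<in> kstar (S k)"
    using z kstar_app kstar_single by blast
  then have "?h @ x @ z \<in> kstar (S k)" by (metis append_assoc append_take_drop_id)
  then show "x \<in> Fact (kstar (S k))" unfolding Fact_def by blast
qed



definition NP :: "nat \<Rightarrow> word \<Rightarrow> nat \<Rightarrow> bool" where
  "NP k w p \<longleftrightarrow> drop p w \<in> Pref (kstar (S k))"

lemma NP_short: "k \<ge> 2 \<Longrightarrow> length w < p + k \<Longrightarrow> NP k w p"
  unfolding NP_def by (rule pref_short) auto

lemma NP_rec:
  assumes "k \<ge> 2" "p + k \<le> length w"
  shows "NP k w p \<longleftrightarrow> (take (k-1) (drop p w) \<in> S k \<and> NP k w (p+k-1)) \<or>
                       (take k (drop p w) \<in> S k \<and> NP k w (p+k))"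
proof -
  have l: "k \<le> length (drop p w)" using assms by simp
  have d1: "drop (k-1) (drop p w) = drop (p+k-1) w" using assms(1)
    by (simp add: add.commute)
  have d2: "drop k (drop p w) = drop (p+k) w" by (simp add: add.commute)
  show ?thesis unfolding NP_def using pref_rec[OF assms(1) l] d1 d2 by simp
qed

lemma unc_char:
  assumes "k \<ge> 2"
  shows "uncompletable k w \<longleftrightarrow> (\<forall>j. j \<le> k - 1 \<longrightarrow> j \<le> length w \<longrightarrow> \<not> NP k w j)"
  unfolding uncompletable_def NP_def using fact_char[OF assms, of w] by blast

lemma forb_NP: "j < length w \<Longrightarrow> forbidden k w j \<longleftrightarrow> \<not> NP k w j"
  unfolding forbidden_def NP_def by simp

lemma take_app_eq:
  assumes "take (k-1) B = take (k-1) C" "m \<le> k" "length A \<ge> 1"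
  shows "take m (A @ B) = take m (A @ C)"
proof -
  have "take (m - length A) B = take (m - length A) C"
  proof -
    have "m - length A \<le> k - 1" using assms by simp
    then have "take (m - length A) (take (k-1) B) = take (m - length A) (take (k-1) C)"
      using assms(1) by simp
    then show ?thesis using \<open>m - length A \<le> k - 1\<close> by (simp add: min_absorb1)
  qed
  then show ?thesis by simp
qed

lemma deletion:
  assumes k2: "k \<ge> 2" and xy: "x < y" and yk: "y + k \<le> length w"
    and letters: "take (k-1) (drop x w) = take (k-1) (drop y w)"
    and dom: "\<forall>j<k. NP k w (y+j) \<longrightarrow> NP k w (x+j)"
    and unc: "uncompletable k w"
  shows "uncompletable k (take x w @ drop y w)"
proof -
  define w' where "w' = take x w @ drop y w"
  have lw': "length w' = x + (length w - y)" unfolding w'_def using xy yk by simp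
  have drop_hi: "drop p w' = drop (p - x + y) w" if "p \<ge> x" for p
  proof -
    have "drop p w' = drop (p - x) (drop y w)" unfolding w'_def using that xy yk by simp
    then show ?thesis by (simp add: add.commute)
  qed
  have NP_hi: "NP k w' p \<longleftrightarrow> NP k w (p - x + y)" if "p \<ge> x" for p
    unfolding NP_def using drop_hi[OF that] by simp
  have NP_lo: "NP k w' p \<longrightarrow> NP k w p" if "p < x" for p
    using that
  proof (induction "x - p" arbitrary: p rule: less_induct)
    case less
    have pk': "p + k \<le> length w'" using lw' less.prems yk by simp
    have pk: "p + k \<le> length w" using less.prems xy yk by simp
    have dw': "drop p w' = take (x - p) (drop p w) @ drop y w"
      unfolding w'_def using less.prems xy yk by (simp add: drop_take)
    have dw: "drop p w = take (x - p) (drop p w) @ drop x w"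
      by (metis append_take_drop_id diff_add drop_drop less.prems less_or_eq_imp_le)
    have lA: "length (take (x - p) (drop p w)) \<ge> 1" using less.prems xy yk by simp
    have tk: "take m (drop p w') = take m (drop p w)" if "m \<le> k" for m
    proof -
      have "take m (take (x - p) (drop p w) @ drop y w) = take m (take (x - p) (drop p w) @ drop x w)"
        using take_app_eq[OF letters[symmetric] that lA] .
      then show ?thesis using dw' dw by simp
    qed
    have step: "NP k w' q \<longrightarrow> NP k w q" if "q \<ge> p + k - 1" "q \<le> p + k" for q
    proof (cases "q < x")
      case True
      then have "x - q < x - p" using that k2 by simp
      then show ?thesis using less.hyps True by blast
    next
      case False
      then have qx: "q \<ge> x" by simp
      have "q - x < k" using that less.prems k2 by simp
      then have "NP k w (y + (q - x)) \<longrightarrow> NP k w (x + (q - x))" using dom by blast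
      then show ?thesis using NP_hi[OF qx] qx by (simp add: add.commute)
    qed
    show ?case
    proof
      assume "NP k w' p"
      then have "(take (k-1) (drop p w') \<in> S k \<and> NP k w' (p+k-1)) \<or>
                 (take k (drop p w') \<in> S k \<and> NP k w' (p+k))"
        using NP_rec[OF k2 pk'] by simp
      then have "(take (k-1) (drop p w) \<in> S k \<and> NP k w (p+k-1)) \<or>
                 (take k (drop p w) \<in> S k \<and> NP k w (p+k))"
        using tk[of "k-1"] tk[of k] step[of "p+k-1"] step[of "p+k"] by auto
      then show "NP k w p" using NP_rec[OF k2 pk] by simp
    qed
  qed
  have "\<forall>j. j \<le> k - 1 \<longrightarrow> j \<le> length w' \<longrightarrow> \<not> NP k w' j"
  proof (intro allI impI)
    fix j assume j: "j \<le> k - 1" "j \<le> length w'"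
    have nj: "\<not> NP k w j" using unc j yk unfolding unc_char[OF k2] by simp
    show "\<not> NP k w' j"
    proof (cases "j < x")
      case True
      then show ?thesis using NP_lo nj by blast
    next
      case False
      then have "j - x < k" using j k2 by simp
      then have "NP k w (y + (j - x)) \<longrightarrow> NP k w (x + (j - x))" using dom by blast
      then show ?thesis using NP_hi[of j] False nj by (simp add: add.commute)
    qed
  qed
  then show ?thesis unfolding w'_def[symmetric] unc_char[OF k2] .
qed



lemma block_nth: "p + m \<le> length w \<Longrightarrow> j < m \<Longrightarrow> take m (drop p w) ! j = w ! (p + j)"
  by simp

lemma u_nth: "j < k \<Longrightarrow> u_word k ! j = (if j = 0 then Lb else La)"
  unfolding u_word_def by (cases j) auto

lemma v_nth: "j < k \<Longrightarrow> v_word k ! j = (if j < k - 1 then Lb else La)"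
  unfolding v_word_def by (auto simp: nth_append)

lemma nK_b:
  assumes "k \<ge> 2" "p + k \<le> length w" "take k (drop p w) \<notin> S k"
  shows "w ! p = Lb"
proof -
  have l: "length (take k (drop p w)) = k" using assms by simp
  have "take k (drop p w) = u_word k \<or> take k (drop p w) = v_word k"
    using S_k[OF assms(1) l] assms(3) by blast
  moreover have "take k (drop p w) ! 0 = w ! p" using assms by simp
  moreover have "u_word k ! 0 = Lb" "v_word k ! 0 = Lb" using u_nth[of 0 k] v_nth[of 0 k] assms by auto
  ultimately show ?thesis by auto
qed

lemma nB_lem:
  assumes "k \<ge> 2" "p + k - 1 \<le> length w" "take (k-1) (drop p w) \<notin> S k"
  shows "(\<forall>j<k-1. w ! (p+j) = La) \<or> (\<forall>j<k-1. w ! (p+j) = Lb)"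
proof -
  have l: "length (take (k-1) (drop p w)) = k - 1" using assms by simp
  have "take (k-1) (drop p w) = replicate (k-1) La \<or> take (k-1) (drop p w) = replicate (k-1) Lb"
    using S_k1[OF assms(1) l] assms(3) by blast
  moreover have "\<And>j. j < k - 1 \<Longrightarrow> take (k-1) (drop p w) ! j = w ! (p + j)" using assms by simp
  ultimately show ?thesis by (metis nth_replicate)
qed

lemma all_b_take:
  assumes "p + (k-1) \<le> length w" "\<forall>j<k-1. w ! (p+j) = Lb"
  shows "take (k-1) (drop p w) = replicate (k-1) Lb"
  by (rule nth_equalityI) (use assms in auto)

definition Gd :: "nat \<Rightarrow> word \<Rightarrow> nat \<Rightarrow> bool" where
  "Gd k w x \<longleftrightarrow> (\<exists>j1 j2. j1 < j2 \<and> j2 < k \<and> NP k w (x+j1) \<and> NP k w (x+j2)) \<or>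
      (\<exists>j l. 1 \<le> j \<and> j \<le> k-2 \<and> NP k w (x+j) \<and> l < j \<and> w ! (x+l) = Lb)"

definition Hs :: "nat \<Rightarrow> word \<Rightarrow> nat \<Rightarrow> bool" where
  "Hs k w x \<longleftrightarrow> take (k-1) (drop x w) = replicate (k-1) Lb \<and> (NP k w (x+1) \<or> NP k w (x+k-1))"

lemma Gd_step:
  assumes k4: "k \<ge> 4" and xk: "x + k \<le> length w" and G: "Gd k w (Suc x)"
  shows "Gd k w x \<or> Hs k w x"
proof -
  have k2: "k \<ge> 2" using k4 by simp
  note rec = NP_rec[OF k2 xk]
  have bb: "Hs k w x" if nB: "take (k-1) (drop x w) \<notin> S k" and b: "\<exists>l<k-1. w ! (x+l) = Lb"
      and np: "NP k w (x+k-1)"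
  proof -
    have "(\<forall>j<k-1. w ! (x+j) = La) \<or> (\<forall>j<k-1. w ! (x+j) = Lb)"
      using nB_lem[OF k2 _ nB] xk by simp
    then have "\<forall>j<k-1. w ! (x+j) = Lb" using b by auto
    then have "take (k-1) (drop x w) = replicate (k-1) Lb" using all_b_take[of x k w] xk by simp
    then show ?thesis unfolding Hs_def using np by simp
  qed
  from G show ?thesis unfolding Gd_def[of k w "Suc x"]
  proof (elim disjE exE conjE)
    fix j1 j2 assume j: "j1 < j2" "j2 < k" "NP k w (Suc x + j1)" "NP k w (Suc x + j2)"
    show ?thesis
    proof (cases "Suc j2 < k")
      case True
      then have "Gd k w x" unfolding Gd_def using j
        by (intro disjI1 exI[of _ "Suc j1"] exI[of _ "Suc j2"]) simp
      then show ?thesis by simp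
    next
      case False
      then have j2: "j2 = k - 1" using j by simp
      have nxk: "NP k w (x + k)" using j(4) j2 k2 by simp
      show ?thesis
      proof (cases "NP k w x")
        case True
        then have "Gd k w x" unfolding Gd_def using j j2
          by (intro disjI1 exI[of _ 0] exI[of _ "Suc j1"]) simp
        then show ?thesis by simp
      next
        case nx: False
        have nK: "take k (drop x w) \<notin> S k" using rec nx nxk by blast
        have wx: "w ! x = Lb" using nK_b[OF k2 xk nK] .
        show ?thesis
        proof (cases "Suc j1 \<le> k - 2")
          case True
          then have "Gd k w x" unfolding Gd_def using j wx
            by (intro disjI2 exI[of _ "Suc j1"] exI[of _ 0]) simp
          then show ?thesis by simp
        next
          case False
          then have j1: "Suc j1 = k - 1" using j by simp
          have "x + k - 1 = Suc x + j1" using j1 k2 by simp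
          then have np: "NP k w (x + k - 1)" using j(3) by simp
          have nB: "take (k-1) (drop x w) \<notin> S k" using rec nx np by blast
          have "\<exists>l<k-1. w ! (x+l) = Lb" using wx k2 by (intro exI[of _ 0]) simp
          then have "Hs k w x" using bb[OF nB _ np] by simp
          then show ?thesis by simp
        qed
      qed
    qed
  next
    fix j l assume j: "1 \<le> j" "j \<le> k - 2" "NP k w (Suc x + j)" "l < j" "w ! (Suc x + l) = Lb"
    show ?thesis
    proof (cases "Suc j \<le> k - 2")
      case True
      then have "Gd k w x" unfolding Gd_def using j
        by (intro disjI2 exI[of _ "Suc j"] exI[of _ "Suc l"]) simp
      then show ?thesis by simp
    next
      case False
      then have jj: "Suc j = k - 1" using j by simp
      have "x + k - 1 = Suc x + j" using jj k4 by simp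
      then have np: "NP k w (x + k - 1)" using j(3) by simp
      show ?thesis
      proof (cases "NP k w x")
        case True
        then have "Gd k w x" unfolding Gd_def using np k4
          by (intro disjI1 exI[of _ 0] exI[of _ "k-1"]) simp
        then show ?thesis by simp
      next
        case nx: False
        have nB: "take (k-1) (drop x w) \<notin> S k" using rec nx np by blast
        have "\<exists>l<k-1. w ! (x+l) = Lb" using j jj by (intro exI[of _ "Suc l"]) simp
        then have "Hs k w x" using bb[OF nB _ np] by simp
        then show ?thesis by simp
      qed
    qed
  qed
qed

lemma H_chain:
  assumes k4: "k \<ge> 4" and unc: "\<forall>j. j \<le> k - 1 \<longrightarrow> \<not> NP k w j"
  shows "m + k \<le> length w \<Longrightarrow> Gd k w m \<Longrightarrow> \<exists>y<m. Hs k w y"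
proof (induction m)
  case 0
  then show ?case using unc unfolding Gd_def by force
next
  case (Suc m)
  have "Gd k w m \<or> Hs k w m" using Gd_step[OF k4 _ Suc.prems(2)] Suc.prems(1) by simp
  then show ?case
  proof
    assume "Gd k w m"
    moreover have "m + k \<le> length w" using Suc.prems(1) by simp
    ultimately obtain y where "y < m" "Hs k w y" using Suc.IH by blast
    then show ?case by (intro exI[of _ y]) simp
  next
    assume "Hs k w m"
    then show ?case by (intro exI[of _ m]) simp
  qed
qed



theorem lemma7:
  fixes k :: nat and w :: word and s t i :: nat
  assumes "k \<ge> 4"
    and "minimal_uncompletable k w"
    and "occ k w (v_word k) s"
    and "occ k w (v_word k) t"
    and "s < t"
    and "consecutive k w s t"
    and "1 \<le> i" and "i \<le> k - 2"
    and "forb_local k w t = {0} \<union> {i..k - 2}"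
  shows "card (forb_local k w s) < card (forb_local k w t)"
proof -
  note k4 = assms(1) and mu = assms(2) and os = assms(3) and ot = assms(4) and st = assms(5)
    and cons = assms(6) and i1 = assms(7) and i2 = assms(8) and Fq = assms(9)
  have k2: "k \<ge> 2" using k4 by simp
  have unc: "uncompletable k w" and minl: "\<forall>w'. uncompletable k w' \<longrightarrow> length w \<le> length w'"
    using mu unfolding minimal_uncompletable_def by auto
  have sk: "s + k \<le> length w" and sv: "take k (drop s w) = v_word k" using os unfolding occ_def by auto
  have tk: "t + k \<le> length w" and tv: "take k (drop t w) = v_word k" using ot unfolding occ_def by auto
  have ws: "w ! (s+j) = (if j < k-1 then Lb else La)" if "j < k" for j
  proof -
    have "take k (drop s w) ! j = w ! (s + j)" using block_nth[OF sk that] .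
    then show ?thesis using sv v_nth[OF that] by simp
  qed
  have wt: "w ! (t+j) = (if j < k-1 then Lb else La)" if "j < k" for j
  proof -
    have "take k (drop t w) ! j = w ! (t + j)" using block_nth[OF tk that] .
    then show ?thesis using tv v_nth[OF that] by simp
  qed
  have unc0: "\<forall>j. j \<le> k - 1 \<longrightarrow> \<not> NP k w j"
    using unc sk unfolding unc_char[OF k2] by auto
  have del: False if xy: "x < y" and yk: "y + k \<le> length w"
    and let_: "take (k-1) (drop x w) = take (k-1) (drop y w)"
    and dom: "\<forall>j<k. NP k w (y+j) \<longrightarrow> NP k w (x+j)" for x y
  proof -
    have "uncompletable k (take x w @ drop y w)"
      by (rule deletion[OF k2 xy yk let_ dom unc])
    then have "length w \<le> length (take x w @ drop y w)" using minl by blast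
    moreover have "length (take x w @ drop y w) < length w" using xy yk by simp
    ultimately show False by simp
  qed
  have tks: "s + k \<le> t"
  proof (rule ccontr)
    assume "\<not> s + k \<le> t"
    then have lt: "t < s + k" by simp
    define j where "j = s + k - 1 - t"
    have j1: "j < k - 1" unfolding j_def using st lt k2 by simp
    have "w ! (t + j) = Lb" using wt[of j] j1 by simp
    moreover have "t + j = s + (k - 1)" unfolding j_def using lt k2 by simp
    moreover have "w ! (s + (k-1)) = La" using ws[of "k-1"] k2 by simp
    ultimately show False by simp
  qed
  have only: "r = s \<or> r = t" if "occ_uv k w r" "s \<le> r" "r \<le> t" for r
    using cons tks that unfolding consecutive_def by auto
  have Kin: "take k (drop y w) \<in> S k" if "s < y" "y < t" for y
  proof -
    have yk: "y + k \<le> length w" using that tk by simp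
    have l: "length (take k (drop y w)) = k" using yk by simp
    have "take k (drop y w) \<noteq> u_word k"
    proof
      assume "take k (drop y w) = u_word k"
      then have "occ_uv k w y" unfolding occ_uv_def occ_def using yk by simp
      then show False using only[of y] that by simp
    qed
    moreover have "take k (drop y w) \<noteq> v_word k"
    proof
      assume "take k (drop y w) = v_word k"
      then have "occ_uv k w y" unfolding occ_uv_def occ_def using yk by simp
      then show False using only[of y] that by simp
    qed
    ultimately show ?thesis using S_k[OF k2 l] by simp
  qed
  have mono: "NP k w y" if "s < y" "y < t" "NP k w (y+k)" for y
  proof -
    have yk: "y + k \<le> length w" using that tk by simp
    show ?thesis using NP_rec[OF k2 yk] Kin[OF that(1,2)] that(3) by blast
  qed
  have chain: "\<And>y. s < y \<Longrightarrow> y + m*k < t + k \<Longrightarrow> NP k w (y + m*k) \<Longrightarrow> NP k w y" for m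
  proof (induction m)
    case 0
    then show ?case by simp
  next
    case (Suc m)
    have "NP k w ((y + k) + m * k)" using Suc.prems(3) by (simp add: algebra_simps)
    moreover have "(y + k) + m*k < t + k" using Suc.prems(2) by (simp add: algebra_simps)
    moreover have "s < y + k" using Suc.prems(1) by simp
    ultimately have "NP k w (y + k)" using Suc.IH by blast
    moreover have "y < t" using Suc.prems(2) by simp
    ultimately show ?case using mono Suc.prems(1) by blast
  qed
  have Bin: "take (k-1) (drop (s+j) w) \<in> S k" if j: "1 \<le> j" "j \<le> k - 1" for j
  proof -
    have len: "s + j + (k - 1) \<le> length w" using j tks tk by simp
    have l: "length (take (k-1) (drop (s+j) w)) = k - 1" using len by simp
    have nth: "take (k-1) (drop (s+j) w) ! m = w ! (s + (j + m))" if "m < k - 1" for m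
      using that len by (simp add: add.assoc)
    show ?thesis
    proof (cases "j \<le> k - 2")
      case True
      have "take (k-1) (drop (s+j) w) ! 0 = Lb" using nth[of 0] ws[of j] True k4 by simp
      moreover have "take (k-1) (drop (s+j) w) ! (k - 1 - j) = La"
        using nth[of "k-1-j"] ws[of "k-1"] True j k4 by simp
      moreover have i0: "0 < k - 1" using k4 by simp
      moreover have i1: "k - 1 - j < k - 1" using j by simp
      ultimately have "take (k-1) (drop (s+j) w) \<noteq> replicate (k-1) La"
          "take (k-1) (drop (s+j) w) \<noteq> replicate (k-1) Lb"
        by (metis letter.distinct(1) nth_replicate)+
      then show ?thesis using S_k1[OF k2 l] by simp
    next
      case False
      then have jk: "j = k - 1" using j by simp
      have h0: "take (k-1) (drop (s+j) w) ! 0 = La" using nth[of 0] ws[of "k-1"] jk k4 by simp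
      have nb: "take (k-1) (drop (s+j) w) \<noteq> replicate (k-1) Lb"
      proof
        assume A: "take (k-1) (drop (s+j) w) = replicate (k-1) Lb"
        have "(replicate (k-1) Lb) ! 0 = Lb" using k4 by simp
        then show False using A h0 by simp
      qed
      have na: "take (k-1) (drop (s+j) w) \<noteq> replicate (k-1) La"
      proof
        assume A: "take (k-1) (drop (s+j) w) = replicate (k-1) La"
        define y where "y = s + k - 2"
        have y1: "s < y" "y < t" unfolding y_def using k4 tks by auto
        have yl: "y < length w" unfolding y_def using sk k4 by simp
        have sy: "Suc y = s + j" unfolding y_def jk using k4 by simp
        have dy: "drop y w = w ! y # drop (s + j) w"
          using Cons_nth_drop_Suc[OF yl] sy by simp
        have "y = s + (k - 2)" unfolding y_def using k4 by simp
        then have wy: "w ! y = Lb" using ws[of "k-2"] k4 by simp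
        have "take k (drop y w) = Lb # replicate (k-1) La"
          using dy wy A k4 by (cases k) auto
        also have "\<dots> = u_word k" unfolding u_word_def by simp
        finally have "take k (drop y w) = u_word k" .
        moreover have "length (u_word k) = k" using len_u k4 by simp
        ultimately show False using Kin[OF y1] S_k[OF k2, of "u_word k"] by simp
      qed
      show ?thesis using S_k1[OF k2 l] na nb by simp
    qed
  qed
  have upper: "NP k w y" if "y + k \<le> length w" "take (k-1) (drop y w) \<in> S k" "NP k w (y+k-1)" for y
    using NP_rec[OF k2 that(1)] that(2,3) by blast
  have P: "NP k w (t+r) \<longleftrightarrow> \<not>(r = 0 \<or> (i \<le> r \<and> r \<le> k-2))" if "r < k" for r
  proof -
    have "r \<in> forb_local k w t \<longleftrightarrow> \<not> NP k w (t+r)"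
      unfolding forb_local_def using forb_NP[of "t+r" w k] that tk by simp
    then show ?thesis using Fq that by auto
  qed
  have Pk: "NP k w (t + (k-1))"
  proof -
    have "\<not>(k-1 = 0 \<or> (i \<le> k-1 \<and> k-1 \<le> k-2))" using k4 by arith
    then show ?thesis using P[of "k-1"] k4 by simp
  qed
  define d where "d = t - s"
  define q where "q = d div k"
  define \<delta> where "\<delta> = d mod k"
  have dq: "t = s + q*k + \<delta>" unfolding q_def \<delta>_def d_def using st
    by (metis add.assoc div_mult_mod_eq le_add_diff_inverse less_imp_le)
  have \<delta>k: "\<delta> < k" unfolding \<delta>_def using k4 by simp
  have q1: "q \<ge> 1"
  proof (rule ccontr)
    assume "\<not> q \<ge> 1"
    then have "q = 0" by simp
    then show False using dq \<delta>k tks by simp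
  qed
  then obtain q0 where q0: "q = Suc q0" by (cases q) auto
  define jj where "jj r = (if r + \<delta> < k then r + \<delta> else r + \<delta> - k)" for r
  define pr where "pr r = (if r = 0 then k - 1 else r - 1)" for r
  have jjk: "jj r < k" if "r < k" for r unfolding jj_def using that \<delta>k by auto
  have C1: "NP k w (s + jj r)" if r: "r < k" "1 \<le> jj r" "NP k w (t+r)" for r
  proof (cases "r + \<delta> < k")
    case True
    have e: "s + jj r + q*k = t + r" unfolding jj_def using True dq by simp
    show ?thesis using chain[of "s + jj r" q] e r by simp
  next
    case False
    have e: "s + jj r + (Suc q)*k = t + r" unfolding jj_def using False dq by simp
    show ?thesis using chain[of "s + jj r" "Suc q"] e r by simp
  qed
  have C2: "NP k w (s + jj r)" if r: "r < k" "1 \<le> jj r" "NP k w (t + pr r)" for r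
  proof -
    have jk: "jj r \<le> k - 1" using jjk[OF r(1)] by simp
    let ?y = "s + jj r + k - 1"
    have ys: "s < ?y" using r k4 by simp
    have "NP k w ?y"
    proof (cases "r + \<delta> < k")
      case True
      show ?thesis
      proof (cases "r = 0")
        case True
        have e: "?y + q*k = t + pr r" unfolding jj_def pr_def using True \<open>r + \<delta> < k\<close> dq k4 by simp
        have "pr r < k" unfolding pr_def using True k4 by simp
        then show ?thesis using chain[of ?y q] e r ys k4 by simp
      next
        case False
        have e: "?y + q0*k = t + pr r" unfolding jj_def pr_def using False \<open>r + \<delta> < k\<close> dq q0 k4 by simp
        show ?thesis using chain[of ?y q0] e r ys k4 False unfolding pr_def by simp
      qed
    next
      case False
      then have r0: "r \<noteq> 0" using \<delta>k by auto
      have e: "?y + q*k = t + pr r" unfolding jj_def pr_def using False r0 dq k4 by simp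
      show ?thesis using chain[of ?y q] e r ys k4 r0 unfolding pr_def by simp
    qed
    moreover have "s + jj r + k \<le> length w" using jk tks tk by simp
    moreover have "take (k-1) (drop (s + jj r) w) \<in> S k" using Bin[OF r(2) jk] .
    ultimately show ?thesis using upper[of "s + jj r"] by simp
  qed
  have inj: "inj_on jj {..<k}"
    unfolding inj_on_def jj_def using \<delta>k by auto
  define r0 where "r0 = (if \<delta> = 0 then 0 else k - \<delta>)"
  have jj0: "r = r0" if "r < k" "jj r = 0" for r
    using that \<delta>k unfolding jj_def r0_def by (auto split: if_splits)
  define TS where "TS = {j. j < k \<and> NP k w (s+j)}"
  have TSsub: "TS \<subseteq> {..<k}" unfolding TS_def by auto
  have finTS: "finite TS" using TSsub finite_subset by blast
  have cnt: "card (R - {r0}) \<le> card TS"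
    if R: "R \<subseteq> {..<k}" "\<forall>r\<in>R. NP k w (t+r) \<or> NP k w (t + pr r)" for R
  proof -
    have "jj ` (R - {r0}) \<subseteq> TS"
    proof
      fix x assume "x \<in> jj ` (R - {r0})"
      then obtain r where rr: "r \<in> R" "r \<noteq> r0" "x = jj r" by auto
      have rk: "r < k" using rr R by auto
      have "jj r \<noteq> 0" using jj0[OF rk] rr by auto
      then have j1: "1 \<le> jj r" by simp
      have "NP k w (s + jj r)" using C1[OF rk j1] C2[OF rk j1] R(2) rr(1) by blast
      then show "x \<in> TS" unfolding TS_def using rr jjk[OF rk] by simp
    qed
    moreover have "inj_on jj (R - {r0})" using inj R by (meson Diff_subset inj_on_subset subset_trans)
    ultimately show ?thesis using card_mono[OF finTS] card_image by metis
  qed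
  have fs: "forb_local k w s = {..<k} - TS"
    unfolding forb_local_def TS_def using forb_NP[of _ w k] sk by auto
  have cardfs: "card (forb_local k w s) = k - card TS"
    using fs TSsub card_Diff_subset[OF finTS] by simp
  have cardft: "card (forb_local k w t) = k - i"
  proof -
    have "{0} \<union> {i..k-2} = insert 0 {i..k-2}" by simp
    moreover have "0 \<notin> {i..k-2}" using i1 by simp
    ultimately have "card ({0} \<union> {i..k-2}) = Suc (card {i..k-2})" by simp
    also have "\<dots> = k - i" using i1 i2 by simp
    finally show ?thesis using Fq by simp
  qed
  have TSk: "card TS \<le> k" using card_mono[OF _ TSsub] by simp
  have goal: "card TS \<ge> i + 1 \<Longrightarrow> ?thesis" using cardfs cardft TSk i2 by simp
  show ?thesis
  proof (cases "i \<ge> 2")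
    case True
    define R where "R = insert (k-1) {..i}"
    have Rk: "R \<subseteq> {..<k}" unfolding R_def using i2 k4 by auto
    have Rg: "\<forall>r\<in>R. NP k w (t+r) \<or> NP k w (t + pr r)"
    proof
      fix r assume "r \<in> R"
      then have "r = k - 1 \<or> r \<le> i" unfolding R_def by auto
      then show "NP k w (t+r) \<or> NP k w (t + pr r)"
      proof
        assume "r = k - 1" then show ?thesis using Pk by simp
      next
        assume ri: "r \<le> i"
        show ?thesis
        proof (cases "r = 0")
          case True
          then show ?thesis using Pk unfolding pr_def by simp
        next
          case False
          show ?thesis
          proof (cases "r = i")
            case True
            then have pri: "pr r = i - 1" unfolding pr_def using i1 by simp
            have a: "\<not>(i - 1 = 0 \<or> (i \<le> i - 1 \<and> i - 1 \<le> k - 2))" using \<open>i \<ge> 2\<close> by arith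
            have b: "i - 1 < k" using i2 k4 by arith
            have "NP k w (t + (i-1))" using P[OF b] a by blast
            then show ?thesis using pri by simp
          next
            case False
            have a: "\<not>(r = 0 \<or> (i \<le> r \<and> r \<le> k - 2))" using False ri \<open>r \<noteq> 0\<close> by arith
            have b: "r < k" using ri i2 k4 by arith
            show ?thesis using P[OF b] a by blast
          qed
        qed
      qed
    qed
    have "card R = i + 2" unfolding R_def using i2 k4 by simp
    then have "card (R - {r0}) \<ge> i + 1" using card_Diff_singleton_if[of R r0] by (cases "r0 \<in> R") auto
    then show ?thesis using cnt[OF Rk Rg] goal by simp
  next
    case False
    then have i1': "i = 1" using i1 by simp
    have Pi: "j = k - 1" if "j < k" "NP k w (t+j)" for j
    proof -
      have "\<not>(j = 0 \<or> (i \<le> j \<and> j \<le> k-2))" using P[OF that(1)] that(2) by blast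
      then show ?thesis using that(1) i1' by arith
    qed
    define R where "R = {0, k-1}"
    have Rk: "R \<subseteq> {..<k}" unfolding R_def using k4 by auto
    have Rg: "\<forall>r\<in>R. NP k w (t+r) \<or> NP k w (t + pr r)" unfolding R_def pr_def using Pk by auto
    show ?thesis
    proof (cases "r0 \<in> R")
      case False
      have "card R = 2" unfolding R_def using k4 by simp
      then have "card (R - {r0}) = 2" using False by simp
      then show ?thesis using cnt[OF Rk Rg] goal i1' by simp
    next
      case True
      show ?thesis
      proof (rule ccontr)
        assume nG: "\<not> ?thesis"
        then have c1: "card TS \<le> 1" using goal i1' by linarith
        have single: "TS = {a}" if "a \<in> TS" for a
        proof -
          have "\<forall>a1\<in>TS. \<forall>a2\<in>TS. a1 = a2" using c1 card_le_Suc0_iff_eq[OF finTS] by simp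
          then show ?thesis using that by blast
        qed
        have lets: "take (k-1) (drop s w) = replicate (k-1) Lb"
          using all_b_take[of s k w] ws sk by simp
        have lett: "take (k-1) (drop t w) = replicate (k-1) Lb"
          using all_b_take[of t k w] wt tk by simp
        from True have "r0 = 0 \<or> r0 = k - 1" unfolding R_def by auto
        then show False
        proof
          assume r00: "r0 = 0"
          then have "\<delta> = 0" unfolding r0_def using \<delta>k by (auto split: if_splits)
          then have jk1: "jj (k-1) = k-1" unfolding jj_def using k4 by simp
          have "NP k w (s + (k-1))" using C1[of "k-1"] jk1 Pk k4 by simp
          then have "k - 1 \<in> TS" unfolding TS_def using k4 by simp
          then have TSe: "TS = {k-1}" using single by blast
          have dom: "\<forall>j<k. NP k w (t+j) \<longrightarrow> NP k w (s+j)"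
          proof (intro allI impI)
            fix j assume "j < k" "NP k w (t+j)"
            then have "j = k - 1" using Pi by blast
            moreover have "s + (k - 1) = s + k - 1" using k4 by simp
            ultimately show "NP k w (s+j)" using \<open>k - 1 \<in> TS\<close> unfolding TS_def by simp
          qed
          show False using del[OF st tk _ dom] lets lett by simp
        next
          assume r0k: "r0 = k - 1"
          then have "\<delta> = 1" unfolding r0_def using \<delta>k k4 by (auto split: if_splits)
          then have jj1: "jj 0 = 1" unfolding jj_def using k4 by simp
          have "NP k w (s + 1)" using C2[of 0] jj1 Pk k4 unfolding pr_def by simp
          then have "1 \<in> TS" unfolding TS_def using k4 by simp
          then have TSe: "TS = {1}" using single by blast
          have "Gd k w s" unfolding Gd_def using \<open>NP k w (s+1)\<close> ws[of 0] k4
            by (intro disjI2 exI[of _ 1] exI[of _ 0]) simp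
          then obtain y where y: "y < s" "Hs k w y" using H_chain[OF k4 unc0 sk] by blast
          have lety: "take (k-1) (drop y w) = replicate (k-1) Lb" using y(2) unfolding Hs_def by simp
          from y(2) have "NP k w (y+1) \<or> NP k w (y+k-1)" unfolding Hs_def by simp
          then show False
          proof
            assume ny: "NP k w (y+1)"
            have dom: "\<forall>j<k. NP k w (s+j) \<longrightarrow> NP k w (y+j)"
            proof (intro allI impI)
              fix j assume "j < k" "NP k w (s+j)"
              then have "j \<in> TS" unfolding TS_def by simp
              then have "j = 1" using TSe by simp
              then show "NP k w (y+j)" using ny by simp
            qed
            show False using del[OF y(1) sk _ dom] lety lets by simp
          next
            assume ny: "NP k w (y+k-1)"
            have dom: "\<forall>j<k. NP k w (t+j) \<longrightarrow> NP k w (y+j)"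
            proof (intro allI impI)
              fix j assume "j < k" "NP k w (t+j)"
              then have "j = k - 1" using Pi by blast
              then show "NP k w (y+j)" using ny k4 by simp
            qed
            show False using del[of y t] y(1) st tk dom lety lett by simp
          qed
        qed
      qed
    qed
  qed
qed


end
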